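(* Let $C$ be a binary $[n,k]$ code with $C^\perp\neq\{\bm 0\}$ and $3<d(C^\perp)<k+1$. Then $\gamma(C)\le k-d(C^\perp)+2$.
   Context: An $[n,k]$ code over $\mathbb{F}_q$ is a $k$-dimensional subspace $C\subseteq\mathbb{F}_q^n$; binary means $q=2$; write $E=\{1,\dots,n\}$. For $\bm{x}\in\mathbb{F}_q^n$, $\mathrm{supp}(\bm{x})=\{i: x_i\neq 0\}$ and the weight is $|\mathrm{supp}(\bm{x})|$; for $B\subseteq\mathbb{F}_q^n$, $\mathrm{Supp}(B)=\bigcup_{\bm{x}\in B}\mathrm{supp}(\bm{x})$. $C^\perp$ is the dual code with respect to the standard inner product and $d(C^\perp)$ is the minimum weight of a nonzero codeword of $C^\perp$. The covering dimension is $\gamma(C)=\infty$ if $\mathrm{Supp}(C)\neq E$, and otherwise $\gamma(C)$ is the least positive integer $r$ such that $C$ has an $r$-dimensional subspace $D$ with $\mathrm{Supp}(D)=E$. *)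

theory Defs
  imports "HOL-Analysis.Analysis" "HOL-Library.Extended_Nat"
begin

text \<open>Codes of length n over a field F are subspaces of F^n, modelled as
  'F ^ 'n with the finite index type 'n (so n = CARD('n)); linear structure
  is the library interpretation vec (scalar multiplication *s).\<close>

definition supp :: "'a::zero ^ 'n \<Rightarrow> 'n set" where
  "supp x = {i. x $ i \<noteq> 0}"

definition Supp :: "('a::zero ^ 'n) set \<Rightarrow> 'n set" where
  "Supp B = (\<Union>x\<in>B. supp x)"

definition wt :: "'a::zero ^ 'n \<Rightarrow> nat" where
  "wt x = card (supp x)"

definition dotp :: "'a::comm_semiring_0 ^ 'n \<Rightarrow> 'a ^ 'n \<Rightarrow> 'a" where
  "dotp x y = (\<Sum>i\<in>UNIV. x $ i * y $ i)"

definition dual_code :: "('a::field ^ 'n) set \<Rightarrow> ('a ^ 'n) set" where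
  "dual_code C = {y. \<forall>x\<in>C. dotp x y = 0}"

definition min_dist :: "('a::zero ^ 'n) set \<Rightarrow> nat" where
  "min_dist D = Min {wt y | y. y \<in> D \<and> y \<noteq> 0}"

definition cov_dim :: "('a::field ^ 'n) set \<Rightarrow> enat" where
  "cov_dim C = (if Supp C \<noteq> UNIV then \<infinity>
     else enat (LEAST r. 0 < r \<and> (\<exists>D. vec.subspace D \<and> D \<subseteq> C \<and> vec.dim D = r \<and> Supp D = UNIV)))"

end

theory Submission
  imports Defs
begin


definition restr :: "'n set \<Rightarrow> 'a::zero ^ 'n \<Rightarrow> 'a ^ 'n" where
  "restr K x = (\<chi> i. if i \<in> K then x$i else 0)"

lemma linear_restr: "Vector_Spaces.linear (*s) (*s) (restr K :: 'a::field^'n \<Rightarrow> _)"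
  by unfold_locales (auto simp: restr_def vec_eq_iff)

lemma bin_cases:
  assumes "CARD('a::field) = 2"
  shows "(x::'a) = 0 \<or> x = 1"
proof -
  have fin: "finite (UNIV::'a set)" using assms by (metis card.infinite zero_neq_numeral)
  have "{0,1} = (UNIV::'a set)"
    by (rule card_subset_eq[OF fin]) (auto simp: assms)
  then show ?thesis by auto
qed

lemma one_plus_one:
  assumes "CARD('a::field) = 2"
  shows "(1::'a) + 1 = 0"
proof -
  have "(1::'a) + 1 = 0 \<or> (1::'a) + 1 = 1" using bin_cases[OF assms] by blast
  moreover have "(1::'a) + 1 \<noteq> 1"
    by (metis add.right_neutral add_left_cancel one_neq_zero)
  ultimately show ?thesis by blast
qed

lemma of_nat_bin:
  assumes "CARD('a::field) = 2"
  shows "(of_nat n :: 'a) = (if even n then 0 else 1)"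
proof (induction n)
  case 0 then show ?case by simp
next
  case (Suc n) then show ?case using one_plus_one[OF assms] by (auto simp: algebra_simps)
qed

lemma wt_le: "supp (y::'a::zero^'n) \<subseteq> K \<Longrightarrow> wt y \<le> card K"
  unfolding wt_def by (simp add: card_mono)

lemma supp_empty_iff: "supp (y::'a::zero^'n) = {} \<longleftrightarrow> y = 0"
  by (auto simp: supp_def vec_eq_iff)

lemma fin_wts: "finite {wt y | y. y \<in> (D::('a::zero^'n) set) \<and> y \<noteq> 0}"
proof -
  have "{wt y | y. y \<in> D \<and> y \<noteq> 0} \<subseteq> {..CARD('n)}"
    using wt_le[of _ UNIV] by auto
  then show ?thesis using finite_subset by blast
qed

lemma min_dist_le: "y \<in> D \<Longrightarrow> y \<noteq> 0 \<Longrightarrow> min_dist D \<le> wt y"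
  unfolding min_dist_def by (rule Min_le[OF fin_wts]) auto

lemma min_dist_in: "y \<in> D \<Longrightarrow> y \<noteq> 0 \<Longrightarrow> \<exists>y0\<in>D. y0 \<noteq> 0 \<and> wt y0 = min_dist D"
proof -
  assume "y \<in> D" "y \<noteq> 0"
  then have "min_dist D \<in> {wt y | y. y \<in> D \<and> y \<noteq> 0}"
    unfolding min_dist_def by (intro Min_in[OF fin_wts]) auto
  then show ?thesis by auto
qed

lemma dual_diff: "y \<in> dual_code C \<Longrightarrow> z \<in> dual_code C \<Longrightarrow> y - z \<in> dual_code C"
  by (auto simp: dual_code_def dotp_def right_diff_distrib sum_subtractf)

lemma L:
  fixes C :: "('a::field ^ 'n) set"
  assumes sub: "vec.subspace C"
  shows "(\<exists>x\<in>C. \<forall>i\<in>K. x$i = v$i) \<or> (\<exists>y\<in>dual_code C. supp y \<subseteq> K \<and> (\<Sum>i\<in>K. v$i * y$i) \<noteq> 0)"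
proof -
  { assume nx: "\<not> (\<exists>x\<in>C. \<forall>i\<in>K. x$i = v$i)"
  let ?R = "restr K :: 'a^'n \<Rightarrow> 'a^'n"
  define P where "P = ?R ` C"
  have subP: "vec.subspace P" unfolding P_def
    by (rule vec.linear_subspace_image[OF linear_restr sub])
  define w where "w = ?R v"
  have wP: "w \<notin> P"
  proof
    assume "w \<in> P"
    then obtain x where "x \<in> C" "?R x = w" unfolding P_def by auto
    then have "\<forall>i\<in>K. x$i = v$i" 
    proof (intro ballI)
      fix i assume "i \<in> K"
      have "?R x $ i = w $ i" using \<open>?R x = w\<close> by simp
      then show "x$i = v$i" using \<open>i \<in> K\<close> unfolding w_def restr_def by simp
    qed
    with nx \<open>x \<in> C\<close> show False by blast
  qed
  obtain B0 where B0: "B0 \<subseteq> P" "vec.independent B0" "P \<subseteq> vec.span B0"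
    by (rule vec.basis_exists)
  have spB0: "vec.span B0 = P"
    by (rule vec.span_subspace[OF B0(1) B0(3) subP])
  have wB0: "w \<notin> vec.span B0" using wP spB0 by simp
  have indB: "vec.independent (insert w B0)"
    by (rule vec.independent_insertI[OF wB0 B0(2)])
  have wnB0: "w \<notin> B0" using wB0 vec.span_base by metis
  define \<phi> where "\<phi> = vec.construct (insert w B0) (\<lambda>b. if b = w then (1::'a^'n) else 0)"
  have lin: "Vector_Spaces.linear (*s) (*s) \<phi>" unfolding \<phi>_def by (rule vec.linear_construct[OF indB])
  have \<phi>w: "\<phi> w = 1" unfolding \<phi>_def using vec.construct_basis[OF indB, of w "\<lambda>b. if b = w then 1 else 0"] by simp
  have \<phi>P: "\<phi> x = 0" if "x \<in> P" for x
  proof -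
    have "\<phi> x = (\<lambda>x. 0) x"
    proof (rule vec.linear_eq_on[OF lin _ _])
      show "Vector_Spaces.linear (*s) (*s) (\<lambda>x::'a^'n. 0::'a^'n)" by (rule vec.linear_zero)
      show "x \<in> vec.span B0" using that spB0 by simp
      fix b assume "b \<in> B0"
      then have bw: "b \<noteq> w" using wnB0 by blast
      have "b \<in> insert w B0" using \<open>b \<in> B0\<close> by simp
      from vec.construct_basis[OF indB this, of "\<lambda>b. if b = w then 1 else 0"] bw
      show "\<phi> b = 0" unfolding \<phi>_def by simp
    qed
    then show ?thesis by simp
  qed
  define i0 :: 'n where "i0 = undefined"
  define y where "y = (\<chi> j. if j \<in> K then \<phi> (axis j 1) $ i0 else 0)"
  have key: "(\<Sum>j\<in>UNIV. x$j * y$j) = \<phi> (?R x) $ i0" for x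
  proof -
    have "\<phi> (?R x) $ i0 = (\<Sum>j\<in>UNIV. (?R x)$j * (\<phi> (axis j 1) $ i0))"
      by (rule linear_componentwise[OF lin])
    also have "\<dots> = (\<Sum>j\<in>UNIV. x$j * y$j)"
      by (rule sum.cong) (auto simp: restr_def y_def)
    finally show ?thesis by simp
  qed
  have "y \<in> dual_code C"
    unfolding dual_code_def dotp_def using key \<phi>P P_def by auto
  moreover have "supp y \<subseteq> K" by (auto simp: supp_def y_def)
  moreover have "(\<Sum>i\<in>K. v$i * y$i) \<noteq> 0"
  proof -
    have "(\<Sum>i\<in>K. v$i * y$i) = (\<Sum>j\<in>UNIV. v$j * y$j)"
      by (rule sum.mono_neutral_left) (auto simp: y_def)
    also have "\<dots> = 1" using key \<phi>w w_def by simp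
    finally show ?thesis by simp
  qed
  ultimately have "\<exists>y\<in>dual_code C. supp y \<subseteq> K \<and> (\<Sum>i\<in>K. v$i * y$i) \<noteq> 0" by blast
  }
  then show ?thesis by blast
qed



lemma short:
  assumes "y \<in> dual_code C" "supp y \<subseteq> K" "card K < min_dist (dual_code C)"
  shows "y = 0"
  using min_dist_le[OF assms(1)] wt_le[OF assms(2)] assms(3) by fastforce

lemma surj:
  assumes sub: "vec.subspace C" and "card K < min_dist (dual_code C)"
  shows "\<exists>x\<in>C. \<forall>i\<in>K. x$i = v$i"
proof -
  have "\<not> (\<exists>y\<in>dual_code C. supp y \<subseteq> K \<and> (\<Sum>i\<in>K. v$i * y$i) \<noteq> 0)"
    using short[OF _ _ assms(2)] by fastforce
  then show ?thesis using L[OF sub, of K v] by blast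
qed

lemma dim_bound:
  fixes C :: "('a::field ^ 'n) set"
  assumes sub: "vec.subspace C" and a0: "a0 \<in> J" and finJ: "finite J"
    and wit: "\<And>j. j \<in> J \<Longrightarrow> \<exists>x\<in>C. (\<forall>i\<in>J. x$i = (if i = j then 1 else 0))"
  shows "vec.dim {x\<in>C. \<forall>j\<in>J. x$j = x$a0} + card (J - {a0}) \<le> vec.dim C"
proof -
  have subD: "vec.subspace {x\<in>C. \<forall>j\<in>A. x$j = x$a0}" for A
    using sub unfolding vec.subspace_def by auto
  have main: "finite A \<Longrightarrow> A \<subseteq> J - {a0} \<Longrightarrow> vec.dim {x\<in>C. \<forall>j\<in>A. x$j = x$a0} + card A \<le> vec.dim C" for A
  proof (induction A rule: finite_induct)
    case empty then show ?case by simp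
  next
    case (insert j A)
    have IH: "vec.dim {x\<in>C. \<forall>j\<in>A. x$j = x$a0} + card A \<le> vec.dim C"
      using insert by auto
    have jJ: "j \<in> J" "j \<noteq> a0" using insert by auto
    obtain x where x: "x \<in> C" "\<forall>i\<in>J. x$i = (if i = j then 1 else 0)" using wit[OF jJ(1)] by blast
    have xa0: "x$a0 = 0" using x(2) a0 jJ(2) by auto
    have xA: "x \<in> {x\<in>C. \<forall>j\<in>A. x$j = x$a0}"
    proof -
      have "x$i = 0" if "i \<in> A" for i
      proof -
        have "i \<in> J" "i \<noteq> j" using that insert.prems insert.hyps(2) by auto
        then show ?thesis using x(2) by simp
      qed
      then show ?thesis using x(1) xa0 by simp
    qed
    have xI: "x \<notin> {x\<in>C. \<forall>i\<in>insert j A. x$i = x$a0}"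
      using x xa0 jJ by auto
    have ss: "{x\<in>C. \<forall>i\<in>insert j A. x$i = x$a0} \<subseteq> {x\<in>C. \<forall>j\<in>A. x$j = x$a0}" by auto
    have lt: "vec.dim {x\<in>C. \<forall>i\<in>insert j A. x$i = x$a0} < vec.dim {x\<in>C. \<forall>j\<in>A. x$j = x$a0}"
    proof (rule ccontr)
      assume "\<not> ?thesis"
      then have "{x\<in>C. \<forall>i\<in>insert j A. x$i = x$a0} = {x\<in>C. \<forall>j\<in>A. x$j = x$a0}"
        using vec.subspace_dim_equal[OF subD subD ss] by simp
      then show False using xA xI by blast
    qed
    show ?case using IH lt insert(1,2) by simp
  qed
  have "{x\<in>C. \<forall>j\<in>J. x$j = x$a0} = {x\<in>C. \<forall>j\<in>J - {a0}. x$j = x$a0}" by auto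
  then show ?thesis using main[of "J - {a0}"] finJ by simp
qed

lemma full_supp:
  assumes bin: "CARD('a::field) = 2"
    and y: "y \<in> dual_code C" "supp (y::'a^'n) \<subseteq> K" "y \<noteq> 0" "card K = min_dist (dual_code C)"
  shows "\<forall>i. y$i = (if i \<in> K then 1 else 0)"
proof -
  have "card K \<le> card (supp y)" using min_dist_le[OF y(1,3)] y(4) unfolding wt_def by simp
  then have "supp y = K"
    using card_seteq[of K "supp y"] y(2) by (simp add: card_seteq finite_subset)
  then show ?thesis using bin_cases[OF bin] unfolding supp_def by auto
qed

lemma sum_ind:
  "(\<Sum>i\<in>UNIV. (x::'a::comm_ring_1^'n)$i * (if i \<in> K then 1 else 0)) = (\<Sum>i\<in>K. x$i)"
proof -
  have "(\<Sum>i\<in>UNIV. x$i * (if i \<in> K then 1 else 0)) = (\<Sum>i\<in>UNIV. if i \<in> K then x$i else 0)"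
    by (rule sum.cong) auto
  also have "\<dots> = (\<Sum>i\<in>UNIV \<inter> K. x$i)" by (rule sum.inter_restrict[symmetric]) simp
  finally show ?thesis by simp
qed



lemma caseA:
  assumes "\<forall>i\<in>insert j J. x$i = (\<chi> i. if i = j then 1 else 0)$i" "j \<notin> J"
  shows "(\<forall>a\<in>J. \<forall>b\<in>J. (x::'a::field^'n)$a = x$b) \<and> x$j \<noteq> 0"
proof -
  have "\<forall>a\<in>J. x$a = 0" using assms by auto
  moreover have "x$j = 1" using assms by auto
  ultimately show ?thesis by simp
qed

lemma caseB_sum:
  "(\<Sum>i\<in>insert j J. (\<chi> i. if i = j then 1 else 0)$i * (y::'a::field^'n)$i) = y$j"
proof -
  have "(\<Sum>i\<in>insert j J. (\<chi> i. if i = j then 1 else 0)$i * y$i) = (\<Sum>i\<in>insert j J. if i = j then y$i else 0)"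
    by (rule sum.cong) auto
  also have "\<dots> = y$j" by (simp add: sum.delta')
  finally show ?thesis .
qed

theorem mainTheorem8:
  fixes C :: "('a::field ^ 'n) set" and k :: nat
  assumes "CARD('a) = 2"
    and "vec.subspace C"
    and "vec.dim C = k"
    and "dual_code C \<noteq> {0}"
    and "3 < min_dist (dual_code C)"
    and "min_dist (dual_code C) < k + 1"
  shows "cov_dim C \<le> enat (k - min_dist (dual_code C) + 2)"
proof -
  note bin = assms(1) and sub = assms(2)
  define dc where "dc = dual_code C"
  define d where "d = min_dist dc"
  have d4: "4 \<le> d" "d \<le> k" using assms(5,6) unfolding d_def dc_def by auto
  have "0 \<in> dc" unfolding dc_def dual_code_def dotp_def by simp
  then obtain y1 where y1: "y1 \<in> dc" "y1 \<noteq> 0" using assms(4) unfolding dc_def by blast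
  obtain y0 where y0: "y0 \<in> dc" "y0 \<noteq> 0" "wt y0 = d"
    using min_dist_in[OF y1] unfolding d_def by blast
  have dn: "d \<le> CARD('n)" using wt_le[of y0 UNIV] y0(3) by simp
  have shortK: "y = 0" if "y \<in> dc" "supp y \<subseteq> K" "card K < d" for y K
    using short that unfolding dc_def d_def by blast
  have surjK: "\<exists>x\<in>C. \<forall>i\<in>K. x$i = v$i" if "card K < d" for K v
    using surj[OF sub] that unfolding dc_def d_def by blast
  have Lk: "(\<exists>x\<in>C. \<forall>i\<in>K. x$i = v$i) \<or> (\<exists>y\<in>dc. supp y \<subseteq> K \<and> (\<Sum>i\<in>K. v$i * y$i) \<noteq> 0)" for K v
    using L[OF sub] unfolding dc_def by blast
  have full: "\<forall>i. y$i = (if i \<in> K then 1 else 0)" if "y \<in> dc" "supp y \<subseteq> K" "y \<noteq> 0" "card K = d" for y K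
    using full_supp[OF bin] that unfolding dc_def d_def by blast
  have dotp0: "(\<Sum>i\<in>UNIV. x$i * y$i) = 0" if "x \<in> C" "y \<in> dc" for x y
    using that unfolding dc_def dual_code_def dotp_def by blast
  have goodIn: "\<exists>x\<in>C. (\<forall>a\<in>J. \<forall>b\<in>J. x$a = x$b) \<and> x$j \<noteq> 0" if cJ: "card J < d" and jJ: "j \<in> J" for J j
  proof -
    obtain x where "x \<in> C" "\<forall>i\<in>J. x$i = (\<chi> i. (1::'a))$i" using surjK[OF cJ] by blast
    then show ?thesis using jJ by (intro bexI[of _ x]) auto
  qed
  define good where "good J \<longleftrightarrow> (\<forall>j. \<exists>x\<in>C. (\<forall>a\<in>J. \<forall>b\<in>J. x$a = x$b) \<and> x$j \<noteq> 0)" for J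
  have "\<exists>J. card J = d - 1 \<and> good J"
  proof -
    obtain J0 :: "'n set" where J0: "card J0 = d - 1"
    proof -
      have "d - 1 \<le> card (UNIV :: 'n set)" using dn by simp
      from obtain_subset_with_card_n[OF this] obtain T :: "'n set" where "card T = d - 1" by blast
      then show ?thesis using that by blast
    qed
    have finJ0: "finite J0" by simp
    have cJ0: "card J0 < d" using J0 d4 by linarith
    show ?thesis
    proof (cases "even d")
      case True
      have "good J0" unfolding good_def
      proof
        fix j
        show "\<exists>x\<in>C. (\<forall>a\<in>J0. \<forall>b\<in>J0. x$a = x$b) \<and> x$j \<noteq> 0"
        proof (cases "j \<in> J0")
          case True then show ?thesis using goodIn J0 d4 by simp
        next
          case jn: False
          show ?thesis
          proof (cases "\<exists>x\<in>C. \<forall>i\<in>insert j J0. x$i = (\<chi> i. if i = j then 1 else 0)$i")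
            case True then show ?thesis using caseA jn by blast
          next
            case False
            obtain y where y0': "y \<in> dc" "supp y \<subseteq> insert j J0"
                "(\<Sum>i\<in>insert j J0. (\<chi> i. if i = j then 1 else 0)$i * y$i) \<noteq> 0"
              using Lk[of "insert j J0" "\<chi> i. if i = j then 1 else 0"] False by blast
            have y: "y \<in> dc" "supp y \<subseteq> insert j J0" "y$j \<noteq> 0"
              using y0' caseB_sum[of j y J0] by auto
            have yn: "y \<noteq> 0" using y(3) by auto
            have cI: "card (insert j J0) = d" using J0 jn d4 by simp
            have yv: "\<forall>i. y$i = (if i \<in> insert j J0 then 1 else 0)" using full[OF y(1,2) yn cI] .
            obtain x1 where x1: "x1 \<in> C" "\<forall>i\<in>J0. x1$i = (\<chi> i. (1::'a))$i" using surjK[of J0 "\<chi> i. (1::'a)"] J0 d4 by auto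
            have "0 = (\<Sum>i\<in>UNIV. x1$i * y$i)" using dotp0[OF x1(1) y(1)] by simp
            also have "\<dots> = (\<Sum>i\<in>insert j J0. x1$i)" using sum_ind[of x1 "insert j J0"] yv by simp
            also have "\<dots> = x1$j + (\<Sum>i\<in>J0. 1)" using jn x1(2) by simp
            also have "\<dots> = x1$j + 1" using J0 of_nat_bin[OF bin, of "d - 1"] True d4 by simp
            finally have "x1$j + 1 = 0" by simp
            then have "x1$j \<noteq> 0" by auto
            moreover have "\<forall>a\<in>J0. \<forall>b\<in>J0. x1$a = x1$b" using x1(2) by simp
            ultimately show ?thesis using x1(1) by blast
          qed
        qed
      qed
      then show ?thesis using J0 by blast
    next
      case odd: False
      have d5: "5 \<le> d" using odd d4 by presburger
      have "\<exists>m. m \<notin> J0 \<and> (\<forall>y\<in>dc. supp y \<subseteq> insert m J0 \<longrightarrow> y = 0)"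
      proof (rule ccontr)
        assume "\<not> ?thesis"
        then have H: "\<exists>y\<in>dc. supp y \<subseteq> insert m J0 \<and> y \<noteq> 0" if "m \<notin> J0" for m
          using that by blast
        let ?R = "restr J0 :: 'a^'n \<Rightarrow> 'a^'n"
        have inj: "inj_on ?R C"
        proof (subst vec.linear_inj_on_iff_eq_0[OF linear_restr sub], intro ballI impI)
          fix z assume z: "z \<in> C" "?R z = 0"
          show "z = 0" unfolding vec_eq_iff
          proof
            fix m
            show "z$m = 0$m"
            proof (cases "m \<in> J0")
              case True
              have "?R z $ m = 0" using z(2) by simp
              then show ?thesis using True by (simp add: restr_def)
            next
              case False
              obtain y where y: "y \<in> dc" "supp y \<subseteq> insert m J0" "y \<noteq> 0" using H[OF False] by blast
              have ym: "y$m \<noteq> 0"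
              proof
                assume "y$m = 0"
                then have "supp y \<subseteq> J0" using y(2) by (auto simp: supp_def)
                then have "y = 0" by (rule shortK[OF y(1) _ cJ0])
                with y(3) show False by simp
              qed
              have zero: "z$i * y$i = 0" if "i \<in> UNIV - {m}" for i
              proof (cases "i \<in> J0")
                case True
                have "?R z $ i = 0" using z(2) by simp
                then show ?thesis using True by (simp add: restr_def)
              next
                case False
                then have "i \<notin> supp y" using y(2) that by auto
                then show ?thesis by (simp add: supp_def)
              qed
              have "0 = (\<Sum>i\<in>UNIV. z$i * y$i)" using dotp0[OF z(1) y(1)] by simp
              also have "\<dots> = z$m * y$m + (\<Sum>i\<in>UNIV - {m}. z$i * y$i)"
                by (rule sum.remove) auto
              also have "\<dots> = z$m * y$m" using zero by (simp add: sum.neutral)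
              finally show ?thesis using ym by simp
            qed
          qed
        qed
        have "vec.dim (?R ` C) = vec.dim C"
          by (rule vec.dim_image_eq[OF linear_restr]) (use inj in \<open>simp add: vec.span_eq_iff[THEN iffD2, OF sub]\<close>)
        moreover have "vec.dim (?R ` C) \<le> card ((\<lambda>j. axis j (1::'a)) ` J0)"
        proof (rule vec.dim_le_card)
          show "finite ((\<lambda>j. axis j (1::'a)) ` J0)" by simp
          show "?R ` C \<subseteq> vec.span ((\<lambda>j. axis j 1) ` J0)"
          proof
            fix v assume "v \<in> ?R ` C"
            then obtain x where v: "v = ?R x" by blast
            have "?R x = (\<Sum>j\<in>J0. x$j *s axis j 1)"
              by (simp add: vec_eq_iff sum_component restr_def axis_def if_distrib sum.delta cong: if_cong)
            also have "\<dots> \<in> vec.span ((\<lambda>j. axis j 1) ` J0)"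
              by (intro vec.span_sum vec.span_scale vec.span_base) auto
            finally show "v \<in> vec.span ((\<lambda>j. axis j 1) ` J0)" using v by simp
          qed
        qed
        moreover have "card ((\<lambda>j. axis j (1::'a)) ` J0) \<le> card J0" by (rule card_image_le) simp
        ultimately show False using J0 d4 assms(3) by simp
      qed
      then obtain m where m: "m \<notin> J0" "\<forall>y\<in>dc. supp y \<subseteq> insert m J0 \<longrightarrow> y = 0" by blast
      define I where "I = insert m J0"
      have cardI: "card I = d" unfolding I_def using m(1) J0 d4 by simp
      have NS: "y = 0" if "y \<in> dc" "supp y \<subseteq> I" for y using m(2) that unfolding I_def by blast
      define Bad where "Bad p \<longleftrightarrow> (\<exists>y\<in>dc. \<exists>j. j \<notin> I \<and> supp y \<subseteq> insert j (I - {p}) \<and> y$j \<noteq> 0)" for p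
      have fullB: "\<forall>i. y$i = (if i \<in> insert j (I - {p}) then 1 else 0)"
        if "p \<in> I" "y \<in> dc" "j \<notin> I" "supp y \<subseteq> insert j (I - {p})" "y$j \<noteq> 0" for p y j
      proof -
        have "card (insert j (I - {p})) = d" using that cardI d4 by (simp add: card_Diff_singleton)
        moreover have "y \<noteq> 0" using that(5) by auto
        ultimately show ?thesis using full that by blast
      qed
      have notboth: "\<not> (Bad p \<and> Bad q)" if "p \<in> I" "q \<in> I" "p \<noteq> q" for p q
      proof
        assume "Bad p \<and> Bad q"
        then obtain yp jp yq jq where yp: "yp \<in> dc" "jp \<notin> I" "supp yp \<subseteq> insert jp (I - {p})" "yp$jp \<noteq> 0"
          and yq: "yq \<in> dc" "jq \<notin> I" "supp yq \<subseteq> insert jq (I - {q})" "yq$jq \<noteq> 0"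
          unfolding Bad_def by blast
        have fp: "\<forall>i. yp$i = (if i \<in> insert jp (I - {p}) then 1 else 0)" using fullB[OF that(1) yp] .
        have fq: "\<forall>i. yq$i = (if i \<in> insert jq (I - {q}) then 1 else 0)" using fullB[OF that(2) yq] .
        define z where "z = yp - yq"
        have zd: "z \<in> dc" unfolding z_def dc_def using dual_diff yp(1) yq(1) unfolding dc_def by blast
        have zq: "z$q \<noteq> 0" unfolding z_def using fp fq that yq(2) by auto
        have zs: "supp z \<subseteq> {p, q, jp, jq}"
        proof
          fix i assume "i \<in> supp z"
          then have "z$i \<noteq> 0" by (simp add: supp_def)
          then show "i \<in> {p, q, jp, jq}" unfolding z_def using fp fq by (auto split: if_splits)
        qed
        have "card {p, q, jp, jq} \<le> 4" using card_length[of "[p, q, jp, jq]"] by simp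
        then have "z = 0" using shortK[OF zd zs] d5 by simp
        then show False using zq by simp
      qed
      have "I \<noteq> {}" using cardI d4 by (intro notI) simp
      then obtain p1 where p1: "p1 \<in> I" by blast
      have "card (I - {p1}) = d - 1" using p1 cardI by (simp add: card_Diff_singleton)
      then have "I - {p1} \<noteq> {}" using d4 by (intro notI) simp
      then obtain p2 where p2: "p2 \<in> I - {p1}" by blast
      define p where "p = (if Bad p1 then p2 else p1)"
      have pI: "p \<in> I" and nb: "\<not> Bad p" using notboth[of p1 p2] p1 p2 unfolding p_def by auto
      define J where "J = I - {p}"
      have cJ: "card J = d - 1" unfolding J_def using pI cardI by (simp add: card_Diff_singleton)
      have "good J" unfolding good_def
      proof
        fix j
        show "\<exists>x\<in>C. (\<forall>a\<in>J. \<forall>b\<in>J. x$a = x$b) \<and> x$j \<noteq> 0"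
        proof (cases "j \<in> J")
          case True then show ?thesis using goodIn cJ d4 by simp
        next
          case jn: False
          show ?thesis
          proof (cases "\<exists>x\<in>C. \<forall>i\<in>insert j J. x$i = (\<chi> i. if i = j then 1 else 0)$i")
            case True then show ?thesis using caseA jn by blast
          next
            case False
            obtain y where y0': "y \<in> dc" "supp y \<subseteq> insert j J"
                "(\<Sum>i\<in>insert j J. (\<chi> i. if i = j then 1 else 0)$i * y$i) \<noteq> 0"
              using Lk[of "insert j J" "\<chi> i. if i = j then 1 else 0"] False by blast
            have y: "y \<in> dc" "supp y \<subseteq> insert j J" "y$j \<noteq> 0"
              using y0' caseB_sum[of j y J] by auto
            have yn: "y \<noteq> 0" using y(3) by auto
            show ?thesis
            proof (cases "j = p")
              case True
              then have "insert j J = I" unfolding J_def using pI by auto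
              then show ?thesis using NS[OF y(1)] y(2) yn by simp
            next
              case False
              then have "j \<notin> I" using jn unfolding J_def by auto
              then have "Bad p" unfolding Bad_def using y unfolding J_def by blast
              then show ?thesis using nb by simp
            qed
          qed
        qed
      qed
      then show ?thesis using cJ by blast
    qed
  qed
  then obtain J where J: "card J = d - 1" "good J" by blast
  have finJ: "finite J" by simp
  have "J \<noteq> {}" using J(1) d4 by (intro notI) simp
  then obtain a0 where a0: "a0 \<in> J" by blast
  define D where "D = {x\<in>C. \<forall>j\<in>J. x$j = x$a0}"
  have subD: "vec.subspace D" unfolding D_def using sub unfolding vec.subspace_def by auto
  have DC: "D \<subseteq> C" unfolding D_def by auto
  have wit: "\<exists>x\<in>C. (\<forall>i\<in>J. x$i = (if i = j then 1 else 0))" if "j \<in> J" for j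
    using surjK[of J "\<chi> i. if i = j then 1 else 0"] J(1) d4 by auto
  have dimD: "vec.dim D + (d - 2) \<le> k"
    using dim_bound[OF sub a0 finJ wit] a0 J(1) assms(3) unfolding D_def by (simp add: card_Diff_singleton)
  have SuppD: "Supp D = UNIV"
  proof -
    have "j \<in> Supp D" for j
    proof -
      obtain x where x: "x \<in> C" "\<forall>a\<in>J. \<forall>b\<in>J. x$a = x$b" "x$j \<noteq> 0" using J(2) unfolding good_def by blast
      have "x \<in> D" unfolding D_def using x(1,2) a0 by blast
      moreover have "j \<in> supp x" using x(3) by (simp add: supp_def)
      ultimately show ?thesis unfolding Supp_def by blast
    qed
    then show ?thesis by blast
  qed
  have "Supp D \<subseteq> Supp C" using DC unfolding Supp_def by blast
  then have SuppC: "Supp C = UNIV" using SuppD by auto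
  have Dpos: "0 < vec.dim D"
  proof -
    obtain j :: 'n where True by simp
    have "j \<in> Supp D" using SuppD by simp
    then obtain x where "x \<in> D" "j \<in> supp x" unfolding Supp_def by blast
    then have "x \<in> D" "x \<noteq> 0" by (auto simp: supp_def)
    then have "\<not> D \<subseteq> {0}" by auto
    then show ?thesis using vec.dim_eq_0 by (metis gr0I)
  qed
  have "(LEAST r. 0 < r \<and> (\<exists>D. vec.subspace D \<and> D \<subseteq> C \<and> vec.dim D = r \<and> Supp D = UNIV)) \<le> vec.dim D"
    by (rule Least_le) (use Dpos subD DC SuppD in blast)
  then have "cov_dim C \<le> enat (vec.dim D)" unfolding cov_dim_def using SuppC by simp
  also have "\<dots> \<le> enat (k - d + 2)" using dimD d4 by simp
  finally show ?thesis unfolding d_def dc_def .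
qed

end
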